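(* Let $n\ge 3$, let $\pi\in S_{n-2}$, and let $\tau\in S_n$ be the permutation $\tau=n\,(\pi_1+1)(\pi_2+1)\cdots(\pi_{n-2}+1)\,1$ (in one-line notation). Then $\pi$ is shallow if and only if $\tau$ is shallow.
   Context: For $\pi\in S_n$: $D(\pi)=\sum_{i}|\pi_i-i|$, $I(\pi)$ is the number of inversions, $T(\pi)=n-\mathrm{cyc}(\pi)$ with $\mathrm{cyc}$ the number of cycles in the disjoint cycle decomposition; $\pi$ is shallow if $I(\pi)+T(\pi)=D(\pi)$. *)

theory Defs
  imports "HOL-Combinatorics.Permutations" "HOL-Combinatorics.Orbits"
begin

text \<open>A permutation in S_n is a function p on nat with p permutes {1..n}.\<close>

definition depth :: "nat \<Rightarrow> (nat \<Rightarrow> nat) \<Rightarrow> int" where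
  "depth n p = (\<Sum>i\<in>{1..n}. \<bar>int (p i) - int i\<bar>)"

definition inversions :: "nat \<Rightarrow> (nat \<Rightarrow> nat) \<Rightarrow> nat" where
  "inversions n p = card {(i, j). i \<in> {1..n} \<and> j \<in> {1..n} \<and> i < j \<and> p i > p j}"

definition num_cycles :: "nat \<Rightarrow> (nat \<Rightarrow> nat) \<Rightarrow> nat" where
  "num_cycles n p = card ((\<lambda>x. orbit p x) ` {1..n})"

definition reflection_length :: "nat \<Rightarrow> (nat \<Rightarrow> nat) \<Rightarrow> nat" where
  "reflection_length n p = n - num_cycles n p"

definition shallow :: "nat \<Rightarrow> (nat \<Rightarrow> nat) \<Rightarrow> bool" where
  "shallow n p \<longleftrightarrow> int (inversions n p) + int (reflection_length n p) = depth n p"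

definition tau_ext :: "nat \<Rightarrow> (nat \<Rightarrow> nat) \<Rightarrow> nat \<Rightarrow> nat" where
  "tau_ext n p i = (if i = 1 then n else if i = n then 1
                    else if 2 \<le> i \<and> i \<le> n - 1 then p (i - 1) + 1 else i)"

end

theory Submission
  imports Defs
begin

lemma funpow_shift:
  assumes pm: "p permutes {1..m}" and x: "x \<in> {1..m}"
    and t: "\<And>y. y \<in> {1..m} \<Longrightarrow> t (y+1) = p y + 1"
  shows "(t ^^ k) (x+1) = (p ^^ k) x + 1 \<and> (p ^^ k) x \<in> {1..m}"
proof (induction k)
  case 0 then show ?case using x by simp
next
  case (Suc k)
  then have "(p ^^ Suc k) x \<in> {1..m}" using permutes_in_image[OF pm] by simp
  with Suc show ?case using t by simp
qed

lemma funpow_swap: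
  assumes "t a = b" "t b = a"
  shows "(t ^^ k) a = (if even k then a else b)"
  by (induction k) (use assms in auto)

theorem lemma2p5:
  fixes n :: nat and p :: "nat \<Rightarrow> nat"
  assumes "n \<ge> 3" and "p permutes {1..n-2}"
  shows "shallow (n - 2) p \<longleftrightarrow> shallow n (tau_ext n p)"
proof -
  obtain m where nm: "n = m + 2" and m1: "m \<ge> 1" using assms(1)
    by (intro that[of "n - 2"]) auto
  have pm: "p permutes {1..m}" using assms(2) nm by simp
  define t where "t = tau_ext n p"
  have pin: "\<And>x. x \<in> {1..m} \<Longrightarrow> p x \<in> {1..m}" using permutes_in_image[OF pm] by simp
  have t1: "t 1 = n" and tn: "t n = 1" using nm by (auto simp: t_def tau_ext_def)
  have ts: "\<And>y. y \<in> {1..m} \<Longrightarrow> t (y+1) = p y + 1" using nm by (auto simp: t_def tau_ext_def)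
  have ts': "\<And>i. i \<in> {2..m+1} \<Longrightarrow> t i = p (i - 1) + 1" using nm by (auto simp: t_def tau_ext_def)
  have D: "depth n t = depth m p + 2 * (int n - 1)"
  proof -
    have split: "{1..n} = insert 1 (insert n ((\<lambda>x. x+1) ` {1..m}))"
      using nm by (auto simp: image_iff intro: bexI[of _ "_ - 1"])
    have "depth n t = \<bar>int (t 1) - 1\<bar> + (\<bar>int (t n) - int n\<bar> + (\<Sum>i\<in>(\<lambda>x. x+1) ` {1..m}. \<bar>int (t i) - int i\<bar>))"
      unfolding depth_def split using nm by (subst sum.insert, auto)+
    also have "(\<Sum>i\<in>(\<lambda>x. x+1) ` {1..m}. \<bar>int (t i) - int i\<bar>) = (\<Sum>x\<in>{1..m}. \<bar>int (p x) - int x\<bar>)"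
      using ts by (subst sum.reindex) (auto intro!: sum.cong)
    finally show ?thesis using t1 tn nm by (simp add: depth_def)
  qed
  have I: "inversions n t = inversions m p + (2 * n - 3)"
  proof -
    let ?Sp = "{(i, j). i \<in> {1..m} \<and> j \<in> {1..m} \<and> i < j \<and> p i > p j}"
    let ?A = "(\<lambda>j. (1::nat, j)) ` {2..n}"
    let ?B = "(\<lambda>i. (i, n)) ` {2..m+1}"
    let ?C = "(\<lambda>(i,j). (i+1, j+1)) ` ?Sp"
    have eq: "{(i, j). i \<in> {1..n} \<and> j \<in> {1..n} \<and> i < j \<and> t i > t j} = ?A \<union> (?B \<union> ?C)"
    proof (rule set_eqI, clarify)
      fix i j
      show "((i, j) \<in> {(i, j). i \<in> {1..n} \<and> j \<in> {1..n} \<and> i < j \<and> t i > t j}) = ((i, j) \<in> ?A \<union> (?B \<union> ?C))"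
      proof (cases "i = 1")
        case True
        have "t j < n" if j: "j \<in> {2..n}" for j
        proof (cases "j = n")
          case True then show ?thesis using tn nm by simp
        next
          case False
          then have "j \<in> {2..m+1}" using j nm by auto
          moreover from this have "j - 1 \<in> {1..m}" by auto
          ultimately show ?thesis using ts'[of j] pin[of "j-1"] nm by auto
        qed
        then show ?thesis using True t1 by auto
      next
        case False
        show ?thesis
        proof (cases "j = n")
          case True
          have "t i > 1" if i: "i \<in> {2..m+1}" for i
          proof -
            have "i - 1 \<in> {1..m}" using i by auto
            then show ?thesis using ts'[OF i] pin[of "i-1"] by auto
          qed
          then show ?thesis using True False tn nm by auto
        next
          case jn: False
          have "(i,j) \<in> ?C \<longleftrightarrow> i \<in> {2..m+1} \<and> j \<in> {2..m+1} \<and> i < j \<and> p (i-1) > p (j-1)"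
          proof
            assume "(i,j) \<in> ?C" then show "i \<in> {2..m+1} \<and> j \<in> {2..m+1} \<and> i < j \<and> p (i-1) > p (j-1)" by auto
          next
            assume h: "i \<in> {2..m+1} \<and> j \<in> {2..m+1} \<and> i < j \<and> p (i-1) > p (j-1)"
            then have "(i-1, j-1) \<in> ?Sp" by auto
            moreover have "(i,j) = (\<lambda>(i,j). (i+1, j+1)) (i-1,j-1)" using h by auto
            ultimately show "(i,j) \<in> ?C" by blast
          qed
          moreover have "i \<in> {1..n} \<and> j \<in> {1..n} \<and> i < j \<longleftrightarrow> i \<in> {2..m+1} \<and> j \<in> {2..m+1} \<and> i < j"
            using False jn nm by auto
          moreover have "i \<in> {2..m+1} \<Longrightarrow> j \<in> {2..m+1} \<Longrightarrow> t i > t j \<longleftrightarrow> p (i-1) > p (j-1)"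
            using ts' by auto
          moreover have "(i,j) \<notin> ?A" "(i,j) \<notin> ?B" using False jn by auto
          ultimately show ?thesis by auto
        qed
      qed
    qed
    have cA: "card ?A = n - 1" by (subst card_image) (auto simp: inj_on_def)
    have cB: "card ?B = n - 2" using nm by (subst card_image) (auto simp: inj_on_def)
    have cC: "card ?C = inversions m p" unfolding inversions_def
      by (subst card_image) (auto simp: inj_on_def)
    have fin: "finite ?Sp" by (rule finite_subset[of _ "{1..m} \<times> {1..m}"]) auto
    have "card (?A \<union> (?B \<union> ?C)) = card ?A + (card ?B + card ?C)"
      using fin nm by (subst card_Un_disjoint, auto)+
    then show ?thesis using eq cA cB cC nm unfolding inversions_def by simp
  qed
  have C: "num_cycles n t = num_cycles m p + 1"
  proof -
    have gen: "orbit t a = {a, b}" if "(\<And>k. (t ^^ k) a = (if even k then a else b))" for a b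
    proof -
      have "orbit t a = {(t ^^ k) a | k. 0 < k}" by (rule orbit_altdef)
      also have "\<dots> = {a, b}"
      proof
        show "{(t ^^ k) a | k. 0 < k} \<subseteq> {a, b}" using that by auto
        have "a = (t ^^ 2) a" "b = (t ^^ 1) a" using that[of 2] that[of 1] by auto
        then show "{a, b} \<subseteq> {(t ^^ k) a | k. 0 < k}" by (metis (mono_tags, lifting) empty_subsetI insert_subset mem_Collect_eq zero_less_numeral zero_less_one)
      qed
      finally show ?thesis .
    qed
    have o1: "orbit t 1 = {1, n}" by (rule gen) (rule funpow_swap[OF t1 tn])
    have on: "orbit t n = {1, n}" using gen[of n 1] funpow_swap[of t n 1, OF tn t1] by auto
    have os: "\<And>x. x \<in> {1..m} \<Longrightarrow> orbit t (x+1) = (\<lambda>y. y+1) ` orbit p x"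
    proof -
      fix x assume x: "x \<in> {1..m}"
      have "orbit t (x+1) = {(t ^^ k) (x+1) | k. 0 < k}" by (rule orbit_altdef)
      also have "\<dots> = {(p ^^ k) x + 1 | k. 0 < k}" using funpow_shift[OF pm x ts] by auto
      also have "\<dots> = (\<lambda>y. y+1) ` {(p ^^ k) x | k. 0 < k}" by auto
      also have "\<dots> = (\<lambda>y. y+1) ` orbit p x" by (simp add: orbit_altdef)
      finally show "orbit t (x+1) = (\<lambda>y. y+1) ` orbit p x" .
    qed
    have osub: "\<And>x. x \<in> {1..m} \<Longrightarrow> orbit p x \<subseteq> {1..m}"
      using funpow_shift[OF pm _ ts] by (auto simp: orbit_altdef)
    have split: "{1..n} = insert 1 (insert n ((\<lambda>x. x+1) ` {1..m}))"
      using nm by (auto simp: image_iff intro: bexI[of _ "_ - 1"])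
    have img: "(\<lambda>x. orbit t x) ` {1..n} = insert {1,n} ((\<lambda>S. (\<lambda>y. y+1) ` S) ` ((\<lambda>x. orbit p x) ` {1..m}))"
    proof -
      have "(\<lambda>x. orbit t x) ` ((\<lambda>x. x+1) ` {1..m}) = (\<lambda>x. (\<lambda>y. y+1) ` orbit p x) ` {1..m}"
        unfolding image_image by (rule image_cong) (use os in auto)
      also have "\<dots> = (\<lambda>S. (\<lambda>y. y+1) ` S) ` ((\<lambda>x. orbit p x) ` {1..m})"
        by (simp only: image_image)
      finally have e: "(\<lambda>x. orbit t x) ` ((\<lambda>x. x+1) ` {1..m}) = (\<lambda>S. (\<lambda>y. y+1) ` S) ` ((\<lambda>x. orbit p x) ` {1..m})" .
      show ?thesis unfolding split image_insert e o1 on by simp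
    qed
    have notin: "{1,n} \<notin> (\<lambda>S. (\<lambda>y. y+1) ` S) ` ((\<lambda>x. orbit p x) ` {1..m})"
    proof
      assume "{1,n} \<in> (\<lambda>S. (\<lambda>y. y+1) ` S) ` ((\<lambda>x. orbit p x) ` {1..m})"
      then obtain x where "x \<in> {1..m}" "{1,n} = (\<lambda>y. y+1) ` orbit p x" by auto
      then have "(1::nat) \<in> (\<lambda>y. y+1) ` orbit p x" by (metis insertI1)
      then obtain y where "1 = y + 1" "y \<in> orbit p x" by auto
      with osub[OF \<open>x \<in> {1..m}\<close>] show False by auto
    qed
    have inj: "inj_on (\<lambda>S. (\<lambda>y::nat. y+1) ` S) X" for X
      proof (rule inj_onI)
      fix A B :: "nat set" assume "(\<lambda>y. y+1) ` A = (\<lambda>y. y+1) ` B"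
      moreover have "inj (\<lambda>y::nat. y+1)" by (simp add: inj_def)
      ultimately show "A = B" by (simp add: inj_image_eq_iff)
    qed
    have ci: "card ((\<lambda>S. (\<lambda>y::nat. y+1) ` S) ` ((\<lambda>x. orbit p x) ` {1..m})) = card ((\<lambda>x. orbit p x) ` {1..m})"
      by (rule card_image[OF inj])
    show ?thesis unfolding num_cycles_def img
      by (subst card_insert_disjoint) (use notin ci in auto)
  qed
  have cle: "num_cycles m p \<le> m" unfolding num_cycles_def
    using card_image_le[of "{1..m}" "\<lambda>x. orbit p x"] by simp
  show ?thesis
    unfolding shallow_def reflection_length_def t_def[symmetric]
    using D I C cle nm by (simp add: algebra_simps)
qed

end
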